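(* For every $\varepsilon>0$ there exists $N=N(\varepsilon,\Omega)>0$ such that for every $n>N$, every probability measure $\mu\in\mathcal P(\Omega^n)$ and every partition $\vec V_0$ of $[n]$ of size $\#\vec V_0\le 1/\varepsilon$ the following holds: there exist a partition $\vec V$ of $[n]$ refining $\vec V_0$ and a partition $\vec S$ of $\Omega^n$ such that $\#\vec V+\#\vec S\le N$ and $\mu$ is $\varepsilon$-homogeneous with respect to $(\vec V,\vec S)$.
   Context: $\Omega$ is a fixed finite nonempty set and $\mathcal P(\mathcal X)$ denotes the set of probability measures on a finite set $\mathcal X$; $\|\cdot\|_{TV}$ is the total variation norm. For $\sigma\in\Omega^n$, nonempty $S\subset[n]$ and $\omega\in\Omega$ let $\sigma[\omega|S]=|\sigma^{-1}(\omega)\cap S|/|S|$, so $\sigma[\cdot|S]\in\mathcal P(\Omega)$. For $\mu\in\mathcal P(\Omega^n)$ and $X:\Omega^n\to\mathbb R$, $\langle X(\boldsymbol\sigma)\rangle_\mu=\sum_\sigma\mu(\sigma)X(\sigma)$; for $A\subset\Omega^n$ with $\mu(A)>0$, $\mu[\cdot|A]$ is the conditional measure. The size $\#\vec V$ of a partition $\vec V=(V_1,\dots,V_k)$ is $k$; $\vec W$ refines $\vec V$ if every class of $\vec W$ is contained in a class of $\vec V$. $\mu$ is $\varepsilon$-regular on $U\subset[n]$ if for every $S\subset U$ with $|S|\ge\varepsilon|U|$ we have $\langle\|\boldsymbol\sigma[\cdot|S]-\boldsymbol\sigma[\cdot|U]\|_{TV}\rangle_\mu<\varepsilon$. $\mu$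 is $\varepsilon$-regular with respect to a partition $\vec V$ of $[n]$ if there is $J\subset[\#\vec V]$ with $\sum_{i\notin J}|V_i|<\varepsilon n$ such that $\mu$ is $\varepsilon$-regular on $V_i$ for all $i\in J$. For a partition $\vec V$ of $[n]$ and a partition $\vec S$ of $\Omega^n$, $\mu$ is $\varepsilon$-homogeneous with respect to $(\vec V,\vec S)$ if there is $I\subset[\#\vec S]$ such that: (HM1) $\mu(S_i)>0$ for all $i\in I$ and $\sum_{i\notin I}\mu(S_i)<\varepsilon$; (HM2) for all $i\in[\#\vec S]$, $j\in[\#\vec V]$: $\max_{\sigma,\sigma'\in S_i}\|\sigma[\cdot|V_j]-\sigma'[\cdot|V_j]\|_{TV}<\varepsilon$; (HM3) for all $i\in I$, $\mu[\cdot|S_i]$ is $\varepsilon$-regular with respect to $\vec V$; (HM4) $\mu$ is $\varepsilon$-regular with respect to $\vec V$. *)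

theory Defs
  imports Complex_Main "HOL-Library.FuncSet"
begin

text \<open>[n] is rendered as {..<n}; Omega is a finite type 'a (nonempty as every type).
  Omega^n is the set of extensional functions {..<n} -> 'a.\<close>

definition cube :: "nat \<Rightarrow> (nat \<Rightarrow> 'a) set" where
  "cube n = PiE {..<n} (\<lambda>_. UNIV)"

definition is_prob :: "nat \<Rightarrow> ((nat \<Rightarrow> 'a) \<Rightarrow> real) \<Rightarrow> bool" where
  "is_prob n \<mu> \<longleftrightarrow> (\<forall>\<sigma>. 0 \<le> \<mu> \<sigma>) \<and> (\<forall>\<sigma>. \<sigma> \<notin> cube n \<longrightarrow> \<mu> \<sigma> = 0)
     \<and> (\<Sum>\<sigma>\<in>cube n. \<mu> \<sigma>) = 1"

definition mass :: "nat \<Rightarrow> ((nat \<Rightarrow> 'a) \<Rightarrow> real) \<Rightarrow> (nat \<Rightarrow> 'a) set \<Rightarrow> real" where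
  "mass n \<mu> A = (\<Sum>\<sigma>\<in>cube n \<inter> A. \<mu> \<sigma>)"

definition expect :: "nat \<Rightarrow> ((nat \<Rightarrow> 'a) \<Rightarrow> real) \<Rightarrow> ((nat \<Rightarrow> 'a) \<Rightarrow> real) \<Rightarrow> real" where
  "expect n \<mu> X = (\<Sum>\<sigma>\<in>cube n. \<mu> \<sigma> * X \<sigma>)"

definition cond :: "nat \<Rightarrow> ((nat \<Rightarrow> 'a) \<Rightarrow> real) \<Rightarrow> (nat \<Rightarrow> 'a) set \<Rightarrow> ((nat \<Rightarrow> 'a) \<Rightarrow> real)" where
  "cond n \<mu> A = (\<lambda>\<sigma>. if \<sigma> \<in> A then \<mu> \<sigma> / mass n \<mu> A else 0)"

definition emp :: "(nat \<Rightarrow> 'a) \<Rightarrow> nat set \<Rightarrow> 'a \<Rightarrow> real" where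
  "emp \<sigma> S \<omega> = real (card {i\<in>S. \<sigma> i = \<omega>}) / real (card S)"

definition tv :: "('a::finite \<Rightarrow> real) \<Rightarrow> ('a \<Rightarrow> real) \<Rightarrow> real" where
  "tv p q = (1/2) * (\<Sum>\<omega>\<in>UNIV. \<bar>p \<omega> - q \<omega>\<bar>)"

text \<open>A partition of X given as a list of nonempty, pairwise disjoint classes covering X;
  its size is the length of the list.\<close>
definition is_partition :: "'b set \<Rightarrow> 'b set list \<Rightarrow> bool" where
  "is_partition X Vs \<longleftrightarrow> (\<forall>V\<in>set Vs. V \<noteq> {}) \<and>
     (\<forall>i<length Vs. \<forall>j<length Vs. i \<noteq> j \<longrightarrow> Vs!i \<inter> Vs!j = {}) \<and> \<Union>(set Vs) = X"

definition refines :: "'b set list \<Rightarrow> 'b set list \<Rightarrow> bool" where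
  "refines Ws Vs \<longleftrightarrow> (\<forall>W\<in>set Ws. \<exists>V\<in>set Vs. W \<subseteq> V)"

definition regular_on :: "nat \<Rightarrow> ((nat \<Rightarrow> 'a::finite) \<Rightarrow> real) \<Rightarrow> real \<Rightarrow> nat set \<Rightarrow> bool" where
  "regular_on n \<mu> \<epsilon> U \<longleftrightarrow> (\<forall>S. S \<subseteq> U \<and> real (card S) \<ge> \<epsilon> * real (card U) \<longrightarrow>
      expect n \<mu> (\<lambda>\<sigma>. tv (emp \<sigma> S) (emp \<sigma> U)) < \<epsilon>)"

definition regular_wrt :: "nat \<Rightarrow> ((nat \<Rightarrow> 'a::finite) \<Rightarrow> real) \<Rightarrow> real \<Rightarrow> nat set list \<Rightarrow> bool" where
  "regular_wrt n \<mu> \<epsilon> Vs \<longleftrightarrow> (\<exists>J \<subseteq> {..<length Vs}.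
      real (\<Sum>i\<in>{..<length Vs} - J. card (Vs!i)) < \<epsilon> * real n \<and>
      (\<forall>i\<in>J. regular_on n \<mu> \<epsilon> (Vs!i)))"

definition homogeneous :: "nat \<Rightarrow> ((nat \<Rightarrow> 'a::finite) \<Rightarrow> real) \<Rightarrow> real \<Rightarrow> nat set list
    \<Rightarrow> (nat \<Rightarrow> 'a) set list \<Rightarrow> bool" where
  "homogeneous n \<mu> \<epsilon> Vs Ss \<longleftrightarrow> (\<exists>I \<subseteq> {..<length Ss}.
      (\<forall>i\<in>I. mass n \<mu> (Ss!i) > 0) \<and>
      (\<Sum>i\<in>{..<length Ss} - I. mass n \<mu> (Ss!i)) < \<epsilon> \<and>
      (\<forall>i<length Ss. \<forall>j<length Vs. \<forall>\<sigma>\<in>Ss!i. \<forall>\<sigma>'\<in>Ss!i.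
          tv (emp \<sigma> (Vs!j)) (emp \<sigma>' (Vs!j)) < \<epsilon>) \<and>
      (\<forall>i\<in>I. regular_wrt n (cond n \<mu> (Ss!i)) \<epsilon> Vs) \<and>
      regular_wrt n \<mu> \<epsilon> Vs)"

end

theory Submission
  imports Defs
begin



definition lst :: "'b set \<Rightarrow> 'b list" where
  "lst A = (SOME xs. set xs = A \<and> distinct xs)"

lemma lst: "finite A \<Longrightarrow> set (lst A) = A \<and> distinct (lst A)"
  unfolding lst_def by (rule someI_ex) (rule finite_distinct_list)

definition fib :: "('b \<Rightarrow> 'c) \<Rightarrow> 'b set \<Rightarrow> 'b set list" where
  "fib f X = map (\<lambda>p. {x\<in>X. f x = p}) (lst (f ` X))"

lemma fib_set: "finite X \<Longrightarrow> set (fib f X) = (\<lambda>p. {x\<in>X. f x = p}) ` (f ` X)"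
  unfolding fib_def using lst[of "f ` X"] by auto

lemma fib_length: "finite X \<Longrightarrow> length (fib f X) = card (f ` X)"
  unfolding fib_def using lst[of "f ` X"] by (metis distinct_card length_map finite_imageI)

lemma fib_partition:
  assumes "finite X" shows "is_partition X (fib f X)"
proof -
  have d: "distinct (lst (f ` X))" and s: "set (lst (f ` X)) = f ` X" using lst[of "f ` X"] assms by auto
  show ?thesis unfolding is_partition_def
  proof (intro conjI allI impI ballI)
    fix V assume "V \<in> set (fib f X)" then show "V \<noteq> {}" using fib_set[OF assms, of f] by auto
  next
    fix i j assume ij: "i < length (fib f X)" "j < length (fib f X)" "i \<noteq> j"
    then have "lst (f ` X) ! i \<noteq> lst (f ` X) ! j" using d by (simp add: fib_def nth_eq_iff_index_eq)
    then show "fib f X ! i \<inter> fib f X ! j = {}" using ij by (auto simp: fib_def)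
  next
    show "\<Union> (set (fib f X)) = X" using fib_set[OF assms, of f] by auto
  qed
qed

lemma fib_const: "finite X \<Longrightarrow> W \<in> set (fib f X) \<Longrightarrow> x \<in> W \<Longrightarrow> y \<in> W \<Longrightarrow> f x = f y"
  using fib_set[of X f] by auto

lemma part_distinct: assumes "is_partition X Vs" shows "distinct Vs"
proof -
  have "\<forall>i<length Vs. \<forall>j<length Vs. i \<noteq> j \<longrightarrow> Vs!i \<noteq> Vs!j"
  proof (intro allI impI)
    fix i j assume "i < length Vs" "j < length Vs" "i \<noteq> j"
    then have "Vs!i \<inter> Vs!j = {}" "Vs!i \<noteq> {}" using assms unfolding is_partition_def by auto
    then show "Vs!i \<noteq> Vs!j" by auto
  qed
  then show ?thesis by (simp add: distinct_conv_nth)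
qed

lemma part_disj: assumes "is_partition X Vs" "U \<in> set Vs" "W \<in> set Vs" "U \<noteq> W"
  shows "U \<inter> W = {}"
  using assms unfolding is_partition_def by (metis in_set_conv_nth)

lemma part_ne: "is_partition X Vs \<Longrightarrow> U \<in> set Vs \<Longrightarrow> U \<noteq> {}"
  unfolding is_partition_def by auto

lemma part_Un: "is_partition X Vs \<Longrightarrow> \<Union>(set Vs) = X"
  unfolding is_partition_def by auto

lemma part_iff: "is_partition X Vs \<longleftrightarrow> distinct Vs \<and> {} \<notin> set Vs \<and>
   (\<forall>U\<in>set Vs. \<forall>W\<in>set Vs. U \<noteq> W \<longrightarrow> U \<inter> W = {}) \<and> \<Union>(set Vs) = X"
proof
  assume "is_partition X Vs" then show "distinct Vs \<and> {} \<notin> set Vs \<and>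
   (\<forall>U\<in>set Vs. \<forall>W\<in>set Vs. U \<noteq> W \<longrightarrow> U \<inter> W = {}) \<and> \<Union>(set Vs) = X"
    using part_distinct part_disj part_ne part_Un by metis
next
  assume a: "distinct Vs \<and> {} \<notin> set Vs \<and>
   (\<forall>U\<in>set Vs. \<forall>W\<in>set Vs. U \<noteq> W \<longrightarrow> U \<inter> W = {}) \<and> \<Union>(set Vs) = X"
  show "is_partition X Vs" unfolding is_partition_def
  proof (intro conjI allI impI ballI)
    fix i j assume ij: "i < length Vs" "j < length Vs" "i \<noteq> j"
    then have "Vs!i \<noteq> Vs!j" using a by (simp add: nth_eq_iff_index_eq)
    then show "Vs!i \<inter> Vs!j = {}" using a ij by (meson nth_mem)
  qed (use a in auto)
qed

lemma sum_idx: assumes "distinct xs"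
  shows "(\<Sum>i\<in>{i. i<length xs \<and> Q (xs!i)}. f (xs!i)) = (\<Sum>W\<in>{W\<in>set xs. Q W}. f W)"
proof -
  have "inj_on ((!) xs) {i. i<length xs \<and> Q (xs!i)}"
    using assms by (auto intro!: inj_onI simp: nth_eq_iff_index_eq)
  moreover have "(!) xs ` {i. i<length xs \<and> Q (xs!i)} = {W\<in>set xs. Q W}"
    by (auto simp: in_set_conv_nth)
  ultimately show ?thesis using sum.reindex[of "(!) xs" "{i. i<length xs \<and> Q (xs!i)}" f] by simp
qed

definition cnt :: "(nat \<Rightarrow> 'a) \<Rightarrow> nat set \<Rightarrow> 'a \<Rightarrow> real" where
  "cnt \<sigma> W \<omega> = real (card {x\<in>W. \<sigma> x = \<omega>})"

definition Q :: "(nat \<Rightarrow> 'a::finite) \<Rightarrow> nat set \<Rightarrow> real" where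
  "Q \<sigma> W = (\<Sum>\<omega>\<in>UNIV. (cnt \<sigma> W \<omega>)^2 / real (card W))"

lemma two_term:
  fixes a b x y :: real
  assumes "0 \<le> a" "0 \<le> b" "a \<le> x" "b \<le> y"
  shows "(a+b)^2/(x+y) \<le> a^2/x + b^2/y"
proof (cases "x = 0 \<or> y = 0")
  case True then show ?thesis using assms by auto
next
  case False
  then have x: "x > 0" and y: "y > 0" using assms by auto
  have "(a+b)^2 * (x*y) \<le> (a^2*y + b^2*x) * (x+y)"
  proof -
    have "0 \<le> (a*y - b*x)^2" by simp
    then show ?thesis by (simp add: power2_eq_square algebra_simps)
  qed
  then show ?thesis using x y by (simp add: field_simps)
qed

lemma cnt_le: "finite W \<Longrightarrow> cnt \<sigma> W \<omega> \<le> real (card W)"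
  unfolding cnt_def by (simp add: card_mono)

lemma cnt_union: "finite X \<Longrightarrow> finite Y \<Longrightarrow> X \<inter> Y = {} \<Longrightarrow> cnt \<sigma> (X \<union> Y) \<omega> = cnt \<sigma> X \<omega> + cnt \<sigma> Y \<omega>"
proof -
  assume a: "finite X" "finite Y" "X \<inter> Y = {}"
  have "{x\<in>X \<union> Y. \<sigma> x = \<omega>} = {x\<in>X. \<sigma> x = \<omega>} \<union> {x\<in>Y. \<sigma> x = \<omega>}" by auto
  moreover have "card ({x\<in>X. \<sigma> x = \<omega>} \<union> {x\<in>Y. \<sigma> x = \<omega>}) = card {x\<in>X. \<sigma> x = \<omega>} + card {x\<in>Y. \<sigma> x = \<omega>}"
    using a by (intro card_Un_disjoint) auto
  ultimately show ?thesis unfolding cnt_def by simp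
qed

lemma Q_union:
  assumes "finite X" "finite Y" "X \<inter> Y = {}"
  shows "Q \<sigma> (X \<union> Y) \<le> Q \<sigma> X + Q \<sigma> Y"
proof -
  have c: "card (X \<union> Y) = card X + card Y" using assms card_Un_disjoint by blast
  have "\<And>\<omega>. (cnt \<sigma> (X\<union>Y) \<omega>)^2 / real (card (X\<union>Y)) \<le> (cnt \<sigma> X \<omega>)^2 / real (card X) + (cnt \<sigma> Y \<omega>)^2 / real (card Y)"
    unfolding cnt_union[OF assms] c of_nat_add
    by (rule two_term) (auto simp: cnt_le assms cnt_def card_mono)
  then show ?thesis unfolding Q_def sum.distrib[symmetric] by (rule sum_mono)
qed

lemma Q_super:
  assumes "finite A" "\<forall>W\<in>A. finite W" "\<forall>U\<in>A. \<forall>W\<in>A. U \<noteq> W \<longrightarrow> U \<inter> W = {}"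
  shows "Q \<sigma> (\<Union>A) \<le> (\<Sum>W\<in>A. Q \<sigma> W)"
  using assms
proof (induction A rule: finite_induct)
  case empty then show ?case by (simp add: Q_def)
next
  case (insert W A)
  have "Q \<sigma> (\<Union>(insert W A)) = Q \<sigma> (W \<union> \<Union>A)" by simp
  also have "\<dots> \<le> Q \<sigma> W + Q \<sigma> (\<Union>A)"
    using insert by (intro Q_union) auto
  also have "\<dots> \<le> Q \<sigma> W + (\<Sum>W\<in>A. Q \<sigma> W)" using insert by simp
  finally show ?case using insert by simp
qed

lemma gain_alg:
  fixes a b s r :: real
  assumes "0 \<le> a" "0 \<le> b" "a \<le> s" "b \<le> r"
  shows "(a+b)^2/(s+r) + s * (a/s - (a+b)/(s+r))^2 \<le> a^2/s + b^2/r"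
proof (cases "s = 0 \<or> r = 0")
  case True
  then show ?thesis
  proof
    assume "s = 0" then show ?thesis using assms by simp
  next
    assume "r = 0" then have "b = 0" using assms by simp
    then show ?thesis using \<open>r = 0\<close> by simp
  qed
next
  case False
  then have s: "s > 0" and r: "r > 0" using assms by auto
  have e1: "a/s - (a+b)/(s+r) = (a*r - b*s)/(s*(s+r))" using s r by (simp add: field_simps)
  have e2: "a^2/s + b^2/r - (a+b)^2/(s+r) = (a*r - b*s)^2/(s*r*(s+r))" using s r
    by (simp add: field_simps power2_eq_square)
  have "s * ((a*r - b*s)/(s*(s+r)))^2 = s * (a*r - b*s)^2/(s*s*(s+r)^2)"
    by (simp add: power_divide power_mult_distrib power2_eq_square)
  also have "\<dots> = (a*r - b*s)^2/(s*(s+r)^2)" using s by simp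
  also have "\<dots> \<le> (a*r - b*s)^2/(s*r*(s+r))"
  proof (rule divide_left_mono)
    show "s*r*(s+r) \<le> s*(s+r)^2" using s r by (simp add: power2_eq_square algebra_simps)
    show "0 < s * (s+r)^2 * (s*r*(s+r))" using s r by simp
  qed simp
  finally show ?thesis unfolding e1 using e2 by linarith
qed

lemma Q_gain:
  assumes "finite U" "S \<subseteq> U"
  shows "Q \<sigma> U + real (card S) * (\<Sum>\<omega>\<in>UNIV. (emp \<sigma> S \<omega> - emp \<sigma> U \<omega>)^2) \<le> Q \<sigma> S + Q \<sigma> (U - S)"
proof -
  have fs: "finite S" "finite (U - S)" using assms finite_subset by auto
  have U: "U = S \<union> (U - S)" using assms by auto
  have c: "card U = card S + card (U - S)" using assms by (metis U card_Un_disjoint Diff_disjoint fs)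
  have cu: "\<And>\<omega>. cnt \<sigma> U \<omega> = cnt \<sigma> S \<omega> + cnt \<sigma> (U-S) \<omega>"
    using cnt_union[OF fs] U by (metis Diff_disjoint)
  have e: "\<And>W \<omega>. emp \<sigma> W \<omega> = cnt \<sigma> W \<omega> / real (card W)" unfolding emp_def cnt_def by simp
  have "\<And>\<omega>. (cnt \<sigma> U \<omega>)^2 / real (card U) + real (card S) * (emp \<sigma> S \<omega> - emp \<sigma> U \<omega>)^2
      \<le> (cnt \<sigma> S \<omega>)^2 / real (card S) + (cnt \<sigma> (U-S) \<omega>)^2 / real (card (U-S))"
    unfolding e cu c of_nat_add
    by (rule gain_alg) (auto simp: cnt_le fs cnt_def intro!: card_mono)
  then show ?thesis unfolding Q_def sum_distrib_left sum.distrib[symmetric] by (rule sum_mono)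
qed

lemma Q_nonneg: "0 \<le> Q \<sigma> W" unfolding Q_def by (intro sum_nonneg) auto

lemma Q_le: fixes \<sigma> :: "nat \<Rightarrow> 'a::finite" assumes "finite W" shows "Q \<sigma> W \<le> real (card (UNIV::'a set)) * real (card W)"
proof -
  have "\<And>\<omega>::'a. (cnt \<sigma> W \<omega>)^2 / real (card W) \<le> real (card W)"
  proof -
    fix \<omega>
    have "0 \<le> cnt \<sigma> W \<omega>" "cnt \<sigma> W \<omega> \<le> real (card W)" using cnt_le[OF assms] by (auto simp: cnt_def)
    then have "(cnt \<sigma> W \<omega>)^2 \<le> real (card W) * real (card W)"
      by (simp add: power2_eq_square mult_mono)
    then show "(cnt \<sigma> W \<omega>)^2 / real (card W) \<le> real (card W)"
      by (cases "card W = 0") (auto simp: field_simps)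
  qed
  then have "Q \<sigma> W \<le> (\<Sum>\<omega>\<in>(UNIV::'a set). real (card W))" unfolding Q_def by (rule sum_mono)
  then show ?thesis by simp
qed


lemma sq_tv:
  fixes p q :: "'a::finite \<Rightarrow> real"
  assumes "e > 0"
  shows "(8*e/real (card (UNIV::'a set))) * tv p q - 4*e^2/real (card (UNIV::'a set)) \<le> (\<Sum>\<omega>\<in>UNIV. (p \<omega> - q \<omega>)^2)"
proof -
  define k where "k = real (card (UNIV::'a set))"
  have k: "k > 0" unfolding k_def by (simp add: card_gt_0_iff)
  define a where "a = 2*e/k"
  have "\<And>\<omega>. 2*a*\<bar>p \<omega> - q \<omega>\<bar> - a^2 \<le> (p \<omega> - q \<omega>)^2"
  proof -
    fix \<omega>
    have "0 \<le> (\<bar>p \<omega> - q \<omega>\<bar> - a)^2" by simp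
    then show "2*a*\<bar>p \<omega> - q \<omega>\<bar> - a^2 \<le> (p \<omega> - q \<omega>)^2"
      by (simp add: power2_eq_square algebra_simps)
  qed
  then have "(\<Sum>\<omega>\<in>UNIV. 2*a*\<bar>p \<omega> - q \<omega>\<bar> - a^2) \<le> (\<Sum>\<omega>\<in>UNIV. (p \<omega> - q \<omega>)^2)"
    by (rule sum_mono)
  moreover have "(\<Sum>\<omega>\<in>UNIV. 2*a*\<bar>p \<omega> - q \<omega>\<bar> - a^2) = 2*a*(\<Sum>\<omega>\<in>UNIV. \<bar>p \<omega> - q \<omega>\<bar>) - k*a^2"
    by (simp add: sum_subtractf sum_distrib_left k_def)
  moreover have "2*a*(\<Sum>\<omega>\<in>UNIV. \<bar>p \<omega> - q \<omega>\<bar>) - k*a^2 = (8*e/k) * tv p q - 4*e^2/k"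
    unfolding tv_def a_def using k by (simp add: power2_eq_square field_simps)
  ultimately show ?thesis unfolding k_def by linarith
qed

locale atoms =
  fixes n :: nat and Vs :: "nat set list" and F :: "nat set set"
  assumes part: "is_partition {..<n} Vs" and finF: "finite F"
begin

definition sig :: "nat \<Rightarrow> nat set set \<times> nat set set" where
  "sig x = ({U\<in>set Vs. x\<in>U}, {A\<in>F. x\<in>A})"

definition Vs' where "Vs' = fib sig {..<n}"

lemma Vs'_part: "is_partition {..<n} Vs'"
  unfolding Vs'_def by (rule fib_partition) simp

lemma Vs'_len: "length Vs' \<le> 2^(length Vs) * 2^(card F)"
proof -
  have "sig ` {..<n} \<subseteq> Pow (set Vs) \<times> Pow F" unfolding sig_def by auto
  then have "card (sig ` {..<n}) \<le> card (Pow (set Vs) \<times> Pow F)"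
    by (intro card_mono) (auto simp: finF)
  also have "\<dots> = 2^(card (set Vs)) * 2^(card F)" by (simp add: card_cartesian_product card_Pow finF)
  also have "\<dots> \<le> 2^(length Vs) * 2^(card F)" by (simp add: card_length)
  finally show ?thesis unfolding Vs'_def by (simp add: fib_length)
qed

lemma sig_const: "W \<in> set Vs' \<Longrightarrow> x \<in> W \<Longrightarrow> y \<in> W \<Longrightarrow> sig x = sig y"
  unfolding Vs'_def using fib_const[of "{..<n}" W sig x y] by simp

lemma W_sub: "W \<in> set Vs' \<Longrightarrow> W \<subseteq> {..<n}"
  using part_Un[OF Vs'_part] by auto

lemma W_in_or_disj:
  assumes "W \<in> set Vs'" "U \<in> set Vs \<or> U \<in> F"
  shows "W \<subseteq> U \<or> W \<inter> U = {}"
proof (rule ccontr)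
  assume "\<not> (W \<subseteq> U \<or> W \<inter> U = {})"
  then obtain x y where "x \<in> W" "x \<notin> U" "y \<in> W" "y \<in> U" by auto
  then have "sig x = sig y" using sig_const[OF assms(1)] by blast
  then have e: "{U\<in>set Vs. x\<in>U} = {U\<in>set Vs. y\<in>U}" "{A\<in>F. x\<in>A} = {A\<in>F. y\<in>A}"
    unfolding sig_def by simp_all
  show False
  proof (cases "U \<in> set Vs")
    case True
    then have "U \<in> {U\<in>set Vs. y\<in>U}" using \<open>y \<in> U\<close> by simp
    then show False using e(1) \<open>x \<notin> U\<close> by blast
  next
    case False
    then have "U \<in> {A\<in>F. y\<in>A}" using \<open>y \<in> U\<close> assms(2) by simp
    then show False using e(2) \<open>x \<notin> U\<close> by blast
  qed
qed

lemma Vs'_refines: "refines Vs' Vs"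
  unfolding refines_def
proof
  fix W assume W: "W \<in> set Vs'"
  then obtain x where x: "x \<in> W" using part_ne[OF Vs'_part] by blast
  then have "x \<in> \<Union>(set Vs)" using W_sub[OF W] part_Un[OF part] by auto
  then obtain U where U: "U \<in> set Vs" "x \<in> U" by auto
  then have "W \<subseteq> U" using W_in_or_disj[OF W, of U] x by auto
  then show "\<exists>V\<in>set Vs. W \<subseteq> V" using U by auto
qed

lemma gain_pointwise:
  assumes ch: "\<forall>U\<in>set Vs. ch U \<subseteq> U \<and> (ch U \<in> F \<or> ch U = {})"
  shows "(\<Sum>U\<in>set Vs. Q \<sigma> (ch U) + Q \<sigma> (U - ch U)) \<le> (\<Sum>W\<in>set Vs'. Q \<sigma> W)"
proof -
  define A where "A U = {W\<in>set Vs'. W \<subseteq> ch U}" for U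
  define B where "B U = {W\<in>set Vs'. W \<subseteq> U - ch U}" for U
  have fin': "finite (set Vs')" by simp
  have finW: "\<And>W. W \<in> set Vs' \<Longrightarrow> finite W" using W_sub finite_subset by blast
  have disj': "\<forall>U\<in>set Vs'. \<forall>W\<in>set Vs'. U \<noteq> W \<longrightarrow> U \<inter> W = {}"
    using part_disj[OF Vs'_part] by blast
  have cover: "\<And>x. x < n \<Longrightarrow> \<exists>W\<in>set Vs'. x \<in> W" using part_Un[OF Vs'_part] by auto
  have UA: "\<Union>(A U) = ch U" if U: "U \<in> set Vs" for U
  proof
    show "\<Union>(A U) \<subseteq> ch U" unfolding A_def by auto
    show "ch U \<subseteq> \<Union>(A U)"
    proof
      fix x assume x: "x \<in> ch U"
      then have "x < n" using ch U part_Un[OF part] by auto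
      then obtain W where W: "W \<in> set Vs'" "x \<in> W" using cover by blast
      have "ch U \<in> F \<or> ch U = {}" using ch U by auto
      then have "W \<subseteq> ch U" using W_in_or_disj[OF W(1), of "ch U"] x W by auto
      then show "x \<in> \<Union>(A U)" using W unfolding A_def by auto
    qed
  qed
  have UB: "\<Union>(B U) = U - ch U" if U: "U \<in> set Vs" for U
  proof
    show "\<Union>(B U) \<subseteq> U - ch U" unfolding B_def by auto
    show "U - ch U \<subseteq> \<Union>(B U)"
    proof
      fix x assume x: "x \<in> U - ch U"
      then have "x < n" using U part_Un[OF part] by auto
      then obtain W where W: "W \<in> set Vs'" "x \<in> W" using cover by blast
      have "ch U \<in> F \<or> ch U = {}" using ch U by auto
      then have "W \<inter> ch U = {}" using W_in_or_disj[OF W(1), of "ch U"] x W by auto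
      moreover have "W \<subseteq> U" using W_in_or_disj[OF W(1), of U] x W U by auto
      ultimately have "W \<subseteq> U - ch U" by auto
      then show "x \<in> \<Union>(B U)" using W unfolding B_def by auto
    qed
  qed
  have neW: "\<And>W. W \<in> set Vs' \<Longrightarrow> W \<noteq> {}" using part_ne[OF Vs'_part] by blast
  have AB: "A U \<inter> B U = {}" for U
  proof -
    have "W = {}" if "W \<subseteq> ch U" "W \<subseteq> U - ch U" for W using that by blast
    then show ?thesis unfolding A_def B_def using neW by blast
  qed
  have "(\<Sum>U\<in>set Vs. Q \<sigma> (ch U) + Q \<sigma> (U - ch U)) \<le> (\<Sum>U\<in>set Vs. sum (Q \<sigma>) (A U \<union> B U))"
  proof (rule sum_mono)
    fix U assume U: "U \<in> set Vs"
    have "Q \<sigma> (ch U) \<le> sum (Q \<sigma>) (A U)"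
      unfolding UA[OF U, symmetric] by (rule Q_super) (use finW disj' in \<open>auto simp: A_def\<close>)
    moreover have "Q \<sigma> (U - ch U) \<le> sum (Q \<sigma>) (B U)"
      unfolding UB[OF U, symmetric] by (rule Q_super) (use finW disj' in \<open>auto simp: B_def\<close>)
    moreover have "sum (Q \<sigma>) (A U \<union> B U) = sum (Q \<sigma>) (A U) + sum (Q \<sigma>) (B U)"
      by (rule sum.union_disjoint[OF _ _ AB]) (auto simp: A_def B_def)
    ultimately show "Q \<sigma> (ch U) + Q \<sigma> (U - ch U) \<le> sum (Q \<sigma>) (A U \<union> B U)" by linarith
  qed
  also have "\<dots> = sum (Q \<sigma>) (\<Union>U\<in>set Vs. A U \<union> B U)"
  proof (rule sum.UNION_disjoint[symmetric])
    show "finite (set Vs)" by simp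
    show "\<forall>U\<in>set Vs. finite (A U \<union> B U)" by (auto simp: A_def B_def)
    show "\<forall>U\<in>set Vs. \<forall>U'\<in>set Vs. U \<noteq> U' \<longrightarrow> (A U \<union> B U) \<inter> (A U' \<union> B U') = {}"
    proof (intro ballI impI)
      fix U U' assume U: "U \<in> set Vs" "U' \<in> set Vs" "U \<noteq> U'"
      have "U \<inter> U' = {}" using part_disj[OF part U] .
      moreover have "\<And>W. W \<in> A U \<union> B U \<Longrightarrow> W \<subseteq> U \<and> W \<noteq> {}"
        using ch U neW unfolding A_def B_def by blast
      moreover have "\<And>W. W \<in> A U' \<union> B U' \<Longrightarrow> W \<subseteq> U'"
        using ch U unfolding A_def B_def by blast
      ultimately show "(A U \<union> B U) \<inter> (A U' \<union> B U') = {}" by blast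
    qed
  qed
  also have "\<dots> \<le> sum (Q \<sigma>) (set Vs')"
    by (rule sum_mono2) (auto simp: A_def B_def Q_nonneg)
  finally show ?thesis .
qed

end




lemma finite_cube: "finite (cube n :: (nat \<Rightarrow> 'a::finite) set)"
  unfolding cube_def by (intro finite_PiE) auto

definition G :: "nat \<Rightarrow> ('a::finite \<Rightarrow> nat) set" where
  "G R = {g. \<forall>\<omega>. g \<omega> \<le> R}"

lemma G_PiE: "G R = PiE UNIV (\<lambda>_. {..R})"
  unfolding G_def PiE_def Pi_def extensional_def by auto

lemma finite_G: "finite (G R)" unfolding G_PiE by (intro finite_PiE) auto

lemma card_G: "card (G R :: ('a::finite \<Rightarrow> nat) set) \<ge> 1"
proof -
  have "(\<lambda>_. 0) \<in> (G R :: ('a \<Rightarrow> nat) set)" unfolding G_def by simp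
  then show ?thesis using finite_G by (metis One_nat_def Suc_leI card_gt_0_iff empty_iff)
qed

definition prof :: "nat \<Rightarrow> nat set list \<Rightarrow> (nat \<Rightarrow> 'a::finite) \<Rightarrow> ('a \<Rightarrow> nat) list" where
  "prof R Vs \<sigma> = map (\<lambda>W \<omega>. nat \<lfloor>real R * emp \<sigma> W \<omega>\<rfloor>) Vs"

definition Sp :: "nat \<Rightarrow> nat \<Rightarrow> nat set list \<Rightarrow> (nat \<Rightarrow> 'a::finite) set list" where
  "Sp R n Vs = fib (prof R Vs) (cube n)"

lemma Sp_part: "is_partition (cube n) (Sp R n Vs)"
  unfolding Sp_def by (rule fib_partition) (rule finite_cube)


lemma emp_nonneg: "0 \<le> emp \<sigma> W \<omega>" unfolding emp_def by simp

lemma Sp_len: "length (Sp R n Vs :: (nat \<Rightarrow> 'a::finite) set list) \<le> card (G R :: ('a \<Rightarrow> nat) set) ^ length Vs"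
proof -
  have le1: "emp \<sigma> W \<omega> \<le> 1" for \<sigma> :: "nat \<Rightarrow> 'a" and W \<omega>
  proof (cases "finite W \<and> card W > 0")
    case True
    have "real (card {i\<in>W. \<sigma> i = \<omega>}) \<le> real (card W)" using True by (auto intro!: card_mono)
    then show ?thesis using True unfolding emp_def by (simp add: divide_le_eq_1)
  next
    case False then have "card W = 0" by auto
    then show ?thesis unfolding emp_def by simp
  qed
  have "nat \<lfloor>real R * emp \<sigma> W \<omega>\<rfloor> \<le> R" for \<sigma> :: "nat \<Rightarrow> 'a" and W \<omega>
  proof -
    have "real R * emp \<sigma> W \<omega> \<le> real R" using le1 by (simp add: mult_left_le)
    then have "\<lfloor>real R * emp \<sigma> W \<omega>\<rfloor> \<le> int R" by linarith
    then show ?thesis by simp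
  qed
  then have "prof R Vs ` (cube n :: (nat \<Rightarrow> 'a) set) \<subseteq> {xs. set xs \<subseteq> G R \<and> length xs = length Vs}"
    unfolding prof_def G_def by auto
  then have "card (prof R Vs ` (cube n :: (nat \<Rightarrow> 'a) set)) \<le> card {xs. set xs \<subseteq> (G R :: ('a \<Rightarrow> nat) set) \<and> length xs = length Vs}"
    by (intro card_mono finite_lists_length_eq finite_G)
  then show ?thesis unfolding Sp_def by (simp add: fib_length finite_cube card_lists_length_eq finite_G)
qed

lemma Sp_hm2:
  fixes \<sigma> \<sigma>' :: "nat \<Rightarrow> 'a::finite" and R n :: nat and C :: "(nat \<Rightarrow> 'a) set"
  assumes R: "real (card (UNIV::'a set)) < \<epsilon> * real R"
    and C: "C \<in> set (Sp R n Vs)" "\<sigma> \<in> C" "\<sigma>' \<in> C" and W: "W \<in> set Vs"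
  shows "tv (emp \<sigma> W) (emp \<sigma>' W) < \<epsilon>"
proof -
  have Rp: "R > 0" using R by (cases "R = 0") (auto simp: card_gt_0_iff)
  have "prof R Vs \<sigma> = prof R Vs \<sigma>'" using C unfolding Sp_def
    using fib_const[of "cube n" C "prof R Vs" \<sigma> \<sigma>', OF finite_cube] by blast
  then have eq: "(\<lambda>\<omega>. nat \<lfloor>real R * emp \<sigma> W \<omega>\<rfloor>) = (\<lambda>\<omega>. nat \<lfloor>real R * emp \<sigma>' W \<omega>\<rfloor>)"
    using W unfolding prof_def by (simp add: map_eq_conv)
  have d: "\<bar>emp \<sigma> W \<omega> - emp \<sigma>' W \<omega>\<bar> < 1 / real R" for \<omega>
  proof -
    have "nat \<lfloor>real R * emp \<sigma> W \<omega>\<rfloor> = nat \<lfloor>real R * emp \<sigma>' W \<omega>\<rfloor>" using eq by meson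
    moreover have "0 \<le> \<lfloor>real R * emp \<sigma> W \<omega>\<rfloor>" "0 \<le> \<lfloor>real R * emp \<sigma>' W \<omega>\<rfloor>"
      by (simp_all add: emp_nonneg)
    ultimately have "\<lfloor>real R * emp \<sigma> W \<omega>\<rfloor> = \<lfloor>real R * emp \<sigma>' W \<omega>\<rfloor>" by (metis nat_eq_iff2)
    then have "\<bar>real R * emp \<sigma> W \<omega> - real R * emp \<sigma>' W \<omega>\<bar> < 1" by linarith
    then have "real R * \<bar>emp \<sigma> W \<omega> - emp \<sigma>' W \<omega>\<bar> < 1" by (simp add: abs_mult right_diff_distrib[symmetric])
    then show ?thesis using Rp by (simp add: field_simps)
  qed
  have "(\<Sum>\<omega>\<in>(UNIV::'a set). \<bar>emp \<sigma> W \<omega> - emp \<sigma>' W \<omega>\<bar>) < (\<Sum>\<omega>\<in>(UNIV::'a set). 1 / real R)"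
    by (rule sum_strict_mono) (auto simp: d)
  also have "\<dots> = real (card (UNIV::'a set)) / real R" by simp
  also have "\<dots> < \<epsilon>" using R Rp by (simp add: field_simps)
  finally have "(\<Sum>\<omega>\<in>(UNIV::'a set). \<bar>emp \<sigma> W \<omega> - emp \<sigma>' W \<omega>\<bar>) < \<epsilon>" .
  moreover have "0 \<le> (\<Sum>\<omega>\<in>(UNIV::'a set). \<bar>emp \<sigma> W \<omega> - emp \<sigma>' W \<omega>\<bar>)" by (rule sum_nonneg) simp
  ultimately show ?thesis unfolding tv_def by linarith
qed




definition ind :: "nat \<Rightarrow> ((nat \<Rightarrow> 'a::finite) \<Rightarrow> real) \<Rightarrow> nat set list \<Rightarrow> real" where
  "ind n \<mu> Vs = (\<Sum>\<sigma>\<in>cube n. \<mu> \<sigma> * (\<Sum>W\<in>set Vs. Q \<sigma> W))"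

definition D :: "(nat \<Rightarrow> 'a::finite) \<Rightarrow> nat set \<Rightarrow> nat set \<Rightarrow> real" where
  "D \<sigma> S U = (\<Sum>\<omega>\<in>UNIV. (emp \<sigma> S \<omega> - emp \<sigma> U \<omega>)^2)"

lemma D_nonneg: "0 \<le> D \<sigma> S U" unfolding D_def by (intro sum_nonneg) auto

lemma ind_gain:
  fixes \<mu> :: "(nat \<Rightarrow> 'a::finite) \<Rightarrow> real"
  assumes Vs: "is_partition {..<n} Vs" and Ss: "is_partition (cube n) Ss"
    and w: "\<forall>C\<in>set Ss. \<forall>U\<in>set Vs. w C U \<subseteq> U"
    and mu: "\<forall>\<sigma>. 0 \<le> \<mu> \<sigma>"
  shows "ind n \<mu> Vs + (\<Sum>C\<in>set Ss. \<Sum>U\<in>set Vs. real (card (w C U)) * (\<Sum>\<sigma>\<in>C. \<mu> \<sigma> * D \<sigma> (w C U) U))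
     \<le> ind n \<mu> (atoms.Vs' n Vs ((\<lambda>(C,U). w C U) ` (set Ss \<times> set Vs)))"
proof -
  define F where "F = (\<lambda>(C,U). w C U) ` (set Ss \<times> set Vs)"
  interpret atoms n Vs F using Vs unfolding F_def by unfold_locales auto
  have finU: "finite U" if "U \<in> set Vs" for U
  proof -
    have "U \<subseteq> {..<n}" using part_Un[OF Vs] that by blast
    then show ?thesis by (rule finite_subset) simp
  qed
  have pw: "(\<Sum>U\<in>set Vs. Q \<sigma> U) + (\<Sum>U\<in>set Vs. real (card (w C U)) * D \<sigma> (w C U) U) \<le> (\<Sum>W\<in>set Vs'. Q \<sigma> W)"
    if C: "C \<in> set Ss" for C \<sigma>
  proof -
    have "(\<Sum>U\<in>set Vs. Q \<sigma> U) + (\<Sum>U\<in>set Vs. real (card (w C U)) * D \<sigma> (w C U) U)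
        = (\<Sum>U\<in>set Vs. Q \<sigma> U + real (card (w C U)) * D \<sigma> (w C U) U)" by (simp add: sum.distrib)
    also have "\<dots> \<le> (\<Sum>U\<in>set Vs. Q \<sigma> (w C U) + Q \<sigma> (U - w C U))"
    proof (rule sum_mono)
      fix U assume U: "U \<in> set Vs"
      have "w C U \<subseteq> U" using w C U by blast
      then show "Q \<sigma> U + real (card (w C U)) * D \<sigma> (w C U) U \<le> Q \<sigma> (w C U) + Q \<sigma> (U - w C U)"
        unfolding D_def by (rule Q_gain[OF finU[OF U]])
    qed
    also have "\<dots> \<le> (\<Sum>W\<in>set Vs'. Q \<sigma> W)"
      by (rule gain_pointwise) (use w C in \<open>auto simp: F_def\<close>)
    finally show ?thesis .
  qed
  have cube: "cube n = \<Union>(set Ss)" using part_Un[OF Ss] by simp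
  have finC: "\<forall>C\<in>set Ss. finite C" using cube finite_cube by (metis Union_upper finite_subset)
  have disC: "\<forall>A\<in>set Ss. \<forall>B\<in>set Ss. A \<noteq> B \<longrightarrow> A \<inter> B = {}" using part_disj[OF Ss] by blast
  have "ind n \<mu> Vs' - ind n \<mu> Vs = (\<Sum>\<sigma>\<in>cube n. \<mu> \<sigma> * ((\<Sum>W\<in>set Vs'. Q \<sigma> W) - (\<Sum>U\<in>set Vs. Q \<sigma> U)))"
    unfolding ind_def by (simp add: sum_subtractf right_diff_distrib)
  also have "\<dots> = (\<Sum>C\<in>set Ss. \<Sum>\<sigma>\<in>C. \<mu> \<sigma> * ((\<Sum>W\<in>set Vs'. Q \<sigma> W) - (\<Sum>U\<in>set Vs. Q \<sigma> U)))"
    unfolding cube by (rule sum.Union_disjoint[OF finC disC, unfolded comp_def])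
  also have "\<dots> \<ge> (\<Sum>C\<in>set Ss. \<Sum>\<sigma>\<in>C. \<mu> \<sigma> * (\<Sum>U\<in>set Vs. real (card (w C U)) * D \<sigma> (w C U) U))"
  proof (rule sum_mono, rule sum_mono)
    fix C \<sigma> assume C: "C \<in> set Ss" and "\<sigma> \<in> C"
    have "(\<Sum>U\<in>set Vs. real (card (w C U)) * D \<sigma> (w C U) U) \<le> (\<Sum>W\<in>set Vs'. Q \<sigma> W) - (\<Sum>U\<in>set Vs. Q \<sigma> U)"
      using pw[OF C, of \<sigma>] by linarith
    then show "\<mu> \<sigma> * (\<Sum>U\<in>set Vs. real (card (w C U)) * D \<sigma> (w C U) U) \<le> \<mu> \<sigma> * ((\<Sum>W\<in>set Vs'. Q \<sigma> W) - (\<Sum>U\<in>set Vs. Q \<sigma> U))"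
      by (rule mult_left_mono) (rule mu[rule_format])
  qed
  also have "(\<Sum>C\<in>set Ss. \<Sum>\<sigma>\<in>C. \<mu> \<sigma> * (\<Sum>U\<in>set Vs. real (card (w C U)) * D \<sigma> (w C U) U))
      = (\<Sum>C\<in>set Ss. \<Sum>U\<in>set Vs. real (card (w C U)) * (\<Sum>\<sigma>\<in>C. \<mu> \<sigma> * D \<sigma> (w C U) U))"
  proof (rule sum.cong[OF refl])
    fix C
    have "(\<Sum>\<sigma>\<in>C. \<mu> \<sigma> * (\<Sum>U\<in>set Vs. real (card (w C U)) * D \<sigma> (w C U) U))
       = (\<Sum>\<sigma>\<in>C. \<Sum>U\<in>set Vs. real (card (w C U)) * (\<mu> \<sigma> * D \<sigma> (w C U) U))"
      by (simp add: sum_distrib_left mult_ac)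
    also have "\<dots> = (\<Sum>U\<in>set Vs. \<Sum>\<sigma>\<in>C. real (card (w C U)) * (\<mu> \<sigma> * D \<sigma> (w C U) U))"
      by (rule sum.swap)
    also have "\<dots> = (\<Sum>U\<in>set Vs. real (card (w C U)) * (\<Sum>\<sigma>\<in>C. \<mu> \<sigma> * D \<sigma> (w C U) U))"
      by (simp add: sum_distrib_left)
    finally show "(\<Sum>\<sigma>\<in>C. \<mu> \<sigma> * (\<Sum>U\<in>set Vs. real (card (w C U)) * D \<sigma> (w C U) U))
       = (\<Sum>U\<in>set Vs. real (card (w C U)) * (\<Sum>\<sigma>\<in>C. \<mu> \<sigma> * D \<sigma> (w C U) U))" .
  qed
  finally show ?thesis unfolding F_def by simp
qed




lemma not_reg_wrt:
  assumes "distinct Vs" "\<not> regular_wrt n \<nu> \<epsilon> Vs"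
  shows "\<epsilon> * real n \<le> (\<Sum>U\<in>{U\<in>set Vs. \<not> regular_on n \<nu> \<epsilon> U}. real (card U))"
proof -
  define J where "J = {i. i < length Vs \<and> regular_on n \<nu> \<epsilon> (Vs!i)}"
  have "J \<subseteq> {..<length Vs}" "\<forall>i\<in>J. regular_on n \<nu> \<epsilon> (Vs!i)" unfolding J_def by auto
  then have "\<not> real (\<Sum>i\<in>{..<length Vs} - J. card (Vs!i)) < \<epsilon> * real n"
    using assms(2) unfolding regular_wrt_def by blast
  moreover have "{..<length Vs} - J = {i. i < length Vs \<and> \<not> regular_on n \<nu> \<epsilon> (Vs!i)}"
    unfolding J_def by auto
  ultimately have "\<epsilon> * real n \<le> (\<Sum>i\<in>{i. i < length Vs \<and> \<not> regular_on n \<nu> \<epsilon> (Vs!i)}. real (card (Vs!i)))"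
    by simp
  also have "\<dots> = (\<Sum>U\<in>{U\<in>set Vs. \<not> regular_on n \<nu> \<epsilon> U}. real (card U))"
    by (rule sum_idx[OF assms(1)])
  finally show ?thesis .
qed

lemma mass_nonneg: "\<forall>\<sigma>. 0 \<le> \<mu> \<sigma> \<Longrightarrow> 0 \<le> mass n \<mu> C"
  unfolding mass_def by (intro sum_nonneg) auto

lemma not_hom:
  fixes \<mu> :: "(nat \<Rightarrow> 'a::finite) \<Rightarrow> real"
  assumes "distinct Ss" "\<not> homogeneous n \<mu> \<epsilon> Vs Ss"
    and hm2: "\<forall>i<length Ss. \<forall>j<length Vs. \<forall>\<sigma>\<in>Ss!i. \<forall>\<sigma>'\<in>Ss!i. tv (emp \<sigma> (Vs!j)) (emp \<sigma>' (Vs!j)) < \<epsilon>"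
    and hm4: "regular_wrt n \<mu> \<epsilon> Vs"
  shows "\<epsilon> \<le> (\<Sum>C\<in>{C\<in>set Ss. \<not> (mass n \<mu> C > 0 \<and> regular_wrt n (cond n \<mu> C) \<epsilon> Vs)}. mass n \<mu> C)"
proof -
  define P where "P C \<longleftrightarrow> mass n \<mu> C > 0 \<and> regular_wrt n (cond n \<mu> C) \<epsilon> Vs" for C
  define I where "I = {i. i < length Ss \<and> P (Ss!i)}"
  have "I \<subseteq> {..<length Ss}" "\<forall>i\<in>I. mass n \<mu> (Ss!i) > 0" "\<forall>i\<in>I. regular_wrt n (cond n \<mu> (Ss!i)) \<epsilon> Vs"
    unfolding I_def P_def by auto
  then have "\<not> (\<Sum>i\<in>{..<length Ss} - I. mass n \<mu> (Ss!i)) < \<epsilon>"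
    using assms(2) hm2 hm4 unfolding homogeneous_def by blast
  moreover have "{..<length Ss} - I = {i. i < length Ss \<and> \<not> P (Ss!i)}"
    unfolding I_def by auto
  ultimately have "\<epsilon> \<le> (\<Sum>i\<in>{i. i < length Ss \<and> \<not> P (Ss!i)}. mass n \<mu> (Ss!i))"
    by simp
  also have "\<dots> = (\<Sum>C\<in>{C\<in>set Ss. \<not> P C}. mass n \<mu> C)"
    by (rule sum_idx[OF assms(1)])
  finally show ?thesis unfolding P_def .
qed

lemma expect_cond:
  fixes \<mu> :: "(nat \<Rightarrow> 'a::finite) \<Rightarrow> real"
  assumes "C \<subseteq> cube n" "mass n \<mu> C > 0"
  shows "mass n \<mu> C * expect n (cond n \<mu> C) X = (\<Sum>\<sigma>\<in>C. \<mu> \<sigma> * X \<sigma>)"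
proof -
  have "expect n (cond n \<mu> C) X = (\<Sum>\<sigma>\<in>cube n. (if \<sigma> \<in> C then \<mu> \<sigma> * X \<sigma> / mass n \<mu> C else 0))"
    unfolding expect_def cond_def by (intro sum.cong) auto
  also have "\<dots> = (\<Sum>\<sigma>\<in>cube n \<inter> C. \<mu> \<sigma> * X \<sigma> / mass n \<mu> C)"
    by (simp add: sum.inter_restrict[OF finite_cube])
  also have "\<dots> = (\<Sum>\<sigma>\<in>C. \<mu> \<sigma> * X \<sigma>) / mass n \<mu> C"
    using assms(1) by (simp add: Int_absorb1 sum_divide_distrib)
  finally show ?thesis using assms(2) by simp
qed

lemma mass_sub: "C \<subseteq> cube n \<Longrightarrow> mass n \<mu> C = (\<Sum>\<sigma>\<in>C. \<mu> \<sigma>)"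
  unfolding mass_def by (simp add: Int_absorb1)

lemma wit_bound:
  fixes \<mu> :: "(nat \<Rightarrow> 'a::finite) \<Rightarrow> real"
  assumes e: "\<epsilon> > 0" and mu: "\<forall>\<sigma>. 0 \<le> \<mu> \<sigma>"
    and SU: "\<epsilon> * real (card U) \<le> real (card S)"
    and A: "\<epsilon> * (\<Sum>\<sigma>\<in>C. \<mu> \<sigma>) \<le> (\<Sum>\<sigma>\<in>C. \<mu> \<sigma> * tv (emp \<sigma> S) (emp \<sigma> U))"
  shows "\<epsilon> * real (card U) * (4*\<epsilon>^2/real (card (UNIV::'a set)) * (\<Sum>\<sigma>\<in>C. \<mu> \<sigma>))
     \<le> real (card S) * (\<Sum>\<sigma>\<in>C. \<mu> \<sigma> * D \<sigma> S U)"
proof -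
  define k where "k = real (card (UNIV::'a set))"
  have k: "k > 0" unfolding k_def by (simp add: card_gt_0_iff)
  define a where "a = (\<Sum>\<sigma>\<in>C. \<mu> \<sigma> * tv (emp \<sigma> S) (emp \<sigma> U))"
  define M where "M = (\<Sum>\<sigma>\<in>C. \<mu> \<sigma>)"
  define L where "L = (\<Sum>\<sigma>\<in>C. \<mu> \<sigma> * ((8*\<epsilon>/k) * tv (emp \<sigma> S) (emp \<sigma> U) - 4*\<epsilon>^2/k))"
  have L1: "L \<le> (\<Sum>\<sigma>\<in>C. \<mu> \<sigma> * D \<sigma> S U)"
    unfolding L_def D_def k_def by (intro sum_mono mult_left_mono sq_tv e) (use mu in auto)
  have L2: "L = (8*\<epsilon>/k) * a - 4*\<epsilon>^2/k * M"
    unfolding L_def a_def M_def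
    by (simp add: sum_subtractf sum_distrib_left sum_distrib_right right_diff_distrib mult_ac sum_divide_distrib)
  have L3: "(8*\<epsilon>/k) * (\<epsilon> * M) \<le> (8*\<epsilon>/k) * a"
    using A e k unfolding a_def M_def by (intro mult_left_mono) auto
  have L4: "(8*\<epsilon>/k) * (\<epsilon> * M) = 2 * (4*\<epsilon>^2/k * M)" by (simp add: power2_eq_square)
  have B: "4*\<epsilon>^2/k * (\<Sum>\<sigma>\<in>C. \<mu> \<sigma>) \<le> (\<Sum>\<sigma>\<in>C. \<mu> \<sigma> * D \<sigma> S U)"
  proof -
    have gen: "\<And>L p q r Ds. L \<le> Ds \<Longrightarrow> L = p - q \<Longrightarrow> r \<le> p \<Longrightarrow> r = 2*q \<Longrightarrow> q \<le> (Ds::real)" by linarith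
    show ?thesis unfolding M_def[symmetric] by (rule gen[OF L1 L2 L3 L4])
  qed
  have M: "0 \<le> 4*\<epsilon>^2/k * (\<Sum>\<sigma>\<in>C. \<mu> \<sigma>)" using k mu by (intro mult_nonneg_nonneg sum_nonneg) auto
  show ?thesis unfolding k_def[symmetric]
    by (rule mult_mono[OF SU B]) (use M in auto)
qed




lemma sum_filter_le:
  assumes "finite A" "\<And>x. x \<in> A \<Longrightarrow> (if P x then f x else 0) \<le> (g x :: real)"
  shows "(\<Sum>x\<in>{x\<in>A. P x}. f x) \<le> (\<Sum>x\<in>A. g x)"
proof -
  have "(\<Sum>x\<in>{x\<in>A. P x}. f x) = (\<Sum>x\<in>A. if P x then f x else 0)"
    by (rule sum.inter_filter[OF assms(1)])
  also have "\<dots> \<le> (\<Sum>x\<in>A. g x)" by (rule sum_mono) (rule assms(2))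
  finally show ?thesis .
qed

lemma finish:
  fixes \<mu> :: "(nat \<Rightarrow> 'a::finite) \<Rightarrow> real"
  assumes Vs: "is_partition {..<n} Vs" and SS: "is_partition (cube n) SS"
    and w: "\<forall>C\<in>set SS. \<forall>U\<in>set Vs. w C U \<subseteq> U"
    and mu: "\<forall>\<sigma>. 0 \<le> \<mu> \<sigma>" and len: "length SS \<le> B"
    and g: "c \<le> (\<Sum>C\<in>set SS. \<Sum>U\<in>set Vs. real (card (w C U)) * (\<Sum>\<sigma>\<in>C. \<mu> \<sigma> * D \<sigma> (w C U) U))"
  shows "\<exists>Vs'. is_partition {..<n} Vs' \<and> refines Vs' Vs \<and> length Vs' \<le> 2^(length Vs) * 2^(B * length Vs)
     \<and> ind n \<mu> Vs + c \<le> ind n \<mu> Vs'"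
proof -
  define F where "F = (\<lambda>(C,U). w C U) ` (set SS \<times> set Vs)"
  interpret atoms n Vs F using Vs unfolding F_def by unfold_locales auto
  have "card F \<le> card (set SS \<times> set Vs)" unfolding F_def by (rule card_image_le) simp
  also have "\<dots> = card (set SS) * card (set Vs)" by (rule card_cartesian_product)
  also have "\<dots> \<le> B * length Vs" using len card_length[of SS] card_length[of Vs]
    by (meson le_trans mult_le_mono)
  finally have cF: "card F \<le> B * length Vs" .
  have "length Vs' \<le> 2^(length Vs) * 2^(card F)" by (rule Vs'_len)
  also have "\<dots> \<le> 2^(length Vs) * 2^(B * length Vs)" using cF by (simp add: power_increasing)
  finally have l: "length Vs' \<le> 2^(length Vs) * 2^(B * length Vs)" .
  have "ind n \<mu> Vs + c \<le> ind n \<mu> Vs'"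
    using ind_gain[OF Vs SS w mu] g unfolding F_def by linarith
  then show ?thesis using Vs'_part Vs'_refines l by blast
qed

lemma cube_ne: "cube n \<noteq> {}" unfolding cube_def by (simp add: PiE_eq_empty_iff)

lemma single_part: "is_partition (cube n) [cube n]"
  unfolding part_iff using cube_ne by auto


lemma caseA:
  fixes \<mu> :: "(nat \<Rightarrow> 'a::finite) \<Rightarrow> real"
  assumes e: "\<epsilon> > 0" and prob: "is_prob n \<mu>" and Vs: "is_partition {..<n} Vs"
    and nr: "\<not> regular_wrt n \<mu> \<epsilon> Vs" and B: "1 \<le> B"
  shows "\<exists>Vs'. is_partition {..<n} Vs' \<and> refines Vs' Vs \<and> length Vs' \<le> 2^(length Vs) * 2^(B * length Vs)
     \<and> ind n \<mu> Vs + 4 * \<epsilon>^4 / real (card (UNIV::'a set)) * real n \<le> ind n \<mu> Vs'"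
proof -
  define k where "k = real (card (UNIV::'a set))"
  have k: "k > 0" unfolding k_def by (simp add: card_gt_0_iff)
  have mu: "\<forall>\<sigma>. 0 \<le> \<mu> \<sigma>" and one: "(\<Sum>\<sigma>\<in>cube n. \<mu> \<sigma>) = 1" using prob unfolding is_prob_def by auto
  define bad where "bad U \<longleftrightarrow> \<not> regular_on n \<mu> \<epsilon> U" for U
  define Pw where "Pw U S \<longleftrightarrow> S \<subseteq> U \<and> \<epsilon> * real (card U) \<le> real (card S) \<and> \<not> expect n \<mu> (\<lambda>\<sigma>. tv (emp \<sigma> S) (emp \<sigma> U)) < \<epsilon>" for U S
  define wA where "wA U = (if bad U then (SOME S. Pw U S) else {})" for U
  have wP: "Pw U (wA U)" if "bad U" for U
  proof -
    have "\<exists>S. Pw U S" using that unfolding bad_def regular_on_def Pw_def by auto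
    then show ?thesis using that unfolding wA_def by (simp add: someI_ex)
  qed
  have wsub: "\<forall>C\<in>set [cube n]. \<forall>U\<in>set Vs. wA U \<subseteq> U"
    using wP unfolding Pw_def wA_def by auto
  have tb: "(if bad U then \<epsilon> * real (card U) * (4*\<epsilon>^2/k * 1) else 0)
      \<le> real (card (wA U)) * (\<Sum>\<sigma>\<in>cube n. \<mu> \<sigma> * D \<sigma> (wA U) U)" for U
  proof (cases "bad U")
    case True
    have P: "Pw U (wA U)" using wP True .
    have "\<epsilon> * (\<Sum>\<sigma>\<in>cube n. \<mu> \<sigma>) \<le> (\<Sum>\<sigma>\<in>cube n. \<mu> \<sigma> * tv (emp \<sigma> (wA U)) (emp \<sigma> U))"
      using P one unfolding Pw_def expect_def by simp
    from wit_bound[OF e mu _ this] P have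
      "\<epsilon> * real (card U) * (4*\<epsilon>^2/k * (\<Sum>\<sigma>\<in>cube n. \<mu> \<sigma>)) \<le> real (card (wA U)) * (\<Sum>\<sigma>\<in>cube n. \<mu> \<sigma> * D \<sigma> (wA U) U)"
      unfolding Pw_def k_def by blast
    then show ?thesis using True one by simp
  next
    case False then show ?thesis unfolding wA_def by simp
  qed
  have "4 * \<epsilon>^4 / k * real n = \<epsilon> * (4*\<epsilon>^2/k * 1) * (\<epsilon> * real n)"
    by (simp add: power2_eq_square power4_eq_xxxx)
  also have "\<dots> \<le> \<epsilon> * (4*\<epsilon>^2/k * 1) * (\<Sum>U\<in>{U\<in>set Vs. bad U}. real (card U))"
    using not_reg_wrt[OF part_distinct[OF Vs] nr] e k unfolding bad_def by (intro mult_left_mono) auto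
  also have "\<dots> = (\<Sum>U\<in>{U\<in>set Vs. bad U}. \<epsilon> * real (card U) * (4*\<epsilon>^2/k * 1))"
    by (simp add: sum_distrib_left sum_divide_distrib mult_ac)
  also have "\<dots> \<le> (\<Sum>U\<in>set Vs. real (card (wA U)) * (\<Sum>\<sigma>\<in>cube n. \<mu> \<sigma> * D \<sigma> (wA U) U))"
    by (rule sum_filter_le) (use tb in auto)
  also have "\<dots> = (\<Sum>C\<in>set [cube n]. \<Sum>U\<in>set Vs. real (card (wA U)) * (\<Sum>\<sigma>\<in>C. \<mu> \<sigma> * D \<sigma> (wA U) U))"
    by simp
  finally have g: "4 * \<epsilon>^4 / k * real n \<le> \<dots>" .
  have len: "length [cube n] \<le> B" using B by simp
  show ?thesis using finish[OF Vs single_part wsub mu len g] unfolding k_def by blast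
qed


lemma caseB:
  fixes \<mu> :: "(nat \<Rightarrow> 'a::finite) \<Rightarrow> real"
  assumes e: "\<epsilon> > 0" and Rk: "real (card (UNIV::'a set)) < \<epsilon> * real R"
    and prob: "is_prob n \<mu>" and Vs: "is_partition {..<n} Vs"
    and reg: "regular_wrt n \<mu> \<epsilon> Vs" and nh: "\<not> homogeneous n \<mu> \<epsilon> Vs (Sp R n Vs)"
  shows "\<exists>Vs'. is_partition {..<n} Vs' \<and> refines Vs' Vs \<and>
     length Vs' \<le> 2^(length Vs) * 2^(card (G R :: ('a \<Rightarrow> nat) set) ^ length Vs * length Vs)
     \<and> ind n \<mu> Vs + 4 * \<epsilon>^5 / real (card (UNIV::'a set)) * real n \<le> ind n \<mu> Vs'"
proof -
  define k where "k = real (card (UNIV::'a set))"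
  have k: "k > 0" unfolding k_def by (simp add: card_gt_0_iff)
  have mu: "\<forall>\<sigma>. 0 \<le> \<mu> \<sigma>" using prob unfolding is_prob_def by auto
  define Ss :: "(nat \<Rightarrow> 'a) set list" where "Ss = Sp R n Vs"
  have Ss: "is_partition (cube n) Ss" unfolding Ss_def by (rule Sp_part)
  have Csub: "C \<subseteq> cube n" if "C \<in> set Ss" for C using part_Un[OF Ss] that by blast
  have finC: "finite C" if "C \<in> set Ss" for C using Csub[OF that] finite_cube finite_subset by blast
  have hm2: "\<forall>i<length Ss. \<forall>j<length Vs. \<forall>\<sigma>\<in>Ss!i. \<forall>\<sigma>'\<in>Ss!i. tv (emp \<sigma> (Vs!j)) (emp \<sigma>' (Vs!j)) < \<epsilon>"
  proof (intro allI impI ballI)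
    fix i j \<sigma> \<sigma>' assume "i < length Ss" "j < length Vs" "\<sigma> \<in> Ss!i" "\<sigma>' \<in> Ss!i"
    then show "tv (emp \<sigma> (Vs!j)) (emp \<sigma>' (Vs!j)) < \<epsilon>"
      using Sp_hm2[OF Rk, of "Ss!i" n Vs \<sigma> \<sigma>' "Vs!j"] unfolding Ss_def by auto
  qed
  define badC where "badC C \<longleftrightarrow> mass n \<mu> C > 0 \<and> \<not> regular_wrt n (cond n \<mu> C) \<epsilon> Vs" for C
  have "\<epsilon> \<le> (\<Sum>C\<in>{C\<in>set Ss. \<not> (mass n \<mu> C > 0 \<and> regular_wrt n (cond n \<mu> C) \<epsilon> Vs)}. mass n \<mu> C)"
    by (rule not_hom[OF part_distinct[OF Ss] nh[folded Ss_def] hm2 reg])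
  also have "\<dots> \<le> (\<Sum>C\<in>set Ss. if badC C then mass n \<mu> C else 0)"
    by (rule sum_filter_le) (auto simp: badC_def mass_nonneg[OF mu])
  also have "\<dots> = (\<Sum>C\<in>{C\<in>set Ss. badC C}. mass n \<mu> C)"
    by (rule sum.inter_filter[symmetric]) simp
  finally have mb: "\<epsilon> \<le> (\<Sum>C\<in>{C\<in>set Ss. badC C}. mass n \<mu> C)" .
  define badU where "badU C U \<longleftrightarrow> \<not> regular_on n (cond n \<mu> C) \<epsilon> U" for C U
  define Pw where "Pw C U S \<longleftrightarrow> S \<subseteq> U \<and> \<epsilon> * real (card U) \<le> real (card S) \<and>
     \<not> expect n (cond n \<mu> C) (\<lambda>\<sigma>. tv (emp \<sigma> S) (emp \<sigma> U)) < \<epsilon>" for C U S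
  define w where "w C U = (if badC C \<and> badU C U then (SOME S. Pw C U S) else {})" for C U
  have wP: "Pw C U (w C U)" if "badC C" "badU C U" for C U
  proof -
    have "\<exists>S. Pw C U S" using that unfolding badU_def regular_on_def Pw_def by auto
    then show ?thesis using that unfolding w_def by (simp add: someI_ex)
  qed
  have wsub: "\<forall>C\<in>set Ss. \<forall>U\<in>set Vs. w C U \<subseteq> U"
    using wP unfolding Pw_def w_def by auto
  define T where "T C U = real (card (w C U)) * (\<Sum>\<sigma>\<in>C. \<mu> \<sigma> * D \<sigma> (w C U) U)" for C U
  have tb: "(if badU C U then \<epsilon> * real (card U) * (4*\<epsilon>^2/k * mass n \<mu> C) else 0) \<le> T C U"
    if C: "C \<in> set Ss" "badC C" for C U
  proof (cases "badU C U")
    case True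
    have P: "Pw C U (w C U)" using wP C True by blast
    have ms: "mass n \<mu> C = (\<Sum>\<sigma>\<in>C. \<mu> \<sigma>)" by (rule mass_sub[OF Csub[OF C(1)]])
    have mp: "mass n \<mu> C > 0" using C unfolding badC_def by simp
    have "\<epsilon> * mass n \<mu> C \<le> mass n \<mu> C * expect n (cond n \<mu> C) (\<lambda>\<sigma>. tv (emp \<sigma> (w C U)) (emp \<sigma> U))"
      using P mp unfolding Pw_def by (simp add: mult.commute)
    also have "\<dots> = (\<Sum>\<sigma>\<in>C. \<mu> \<sigma> * tv (emp \<sigma> (w C U)) (emp \<sigma> U))"
      by (rule expect_cond[OF Csub[OF C(1)] mp])
    finally have "\<epsilon> * (\<Sum>\<sigma>\<in>C. \<mu> \<sigma>) \<le> (\<Sum>\<sigma>\<in>C. \<mu> \<sigma> * tv (emp \<sigma> (w C U)) (emp \<sigma> U))"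
      unfolding ms .
    from wit_bound[OF e mu _ this] P have
      "\<epsilon> * real (card U) * (4*\<epsilon>^2/k * (\<Sum>\<sigma>\<in>C. \<mu> \<sigma>)) \<le> T C U"
      unfolding Pw_def k_def T_def by blast
    then show ?thesis using True ms by simp
  next
    case False then show ?thesis unfolding T_def w_def by simp
  qed
  have tC: "(if badC C then (\<epsilon> * (4*\<epsilon>^2/k) * (\<epsilon> * real n)) * mass n \<mu> C else 0) \<le> (\<Sum>U\<in>set Vs. T C U)"
    if C: "C \<in> set Ss" for C
  proof (cases "badC C")
    case True
    have "(\<epsilon> * (4*\<epsilon>^2/k) * (\<epsilon> * real n)) * mass n \<mu> C
       = \<epsilon> * (4*\<epsilon>^2/k * mass n \<mu> C) * (\<epsilon> * real n)" by (simp add: mult_ac)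
    also have "\<dots> \<le> \<epsilon> * (4*\<epsilon>^2/k * mass n \<mu> C) * (\<Sum>U\<in>{U\<in>set Vs. badU C U}. real (card U))"
      using not_reg_wrt[OF part_distinct[OF Vs], of n "cond n \<mu> C" \<epsilon>] True e k mass_nonneg[OF mu, of n C]
      unfolding badU_def badC_def by (intro mult_left_mono) auto
    also have "\<dots> = (\<Sum>U\<in>{U\<in>set Vs. badU C U}. \<epsilon> * real (card U) * (4*\<epsilon>^2/k * mass n \<mu> C))"
      by (simp add: sum_distrib_left sum_divide_distrib mult_ac)
    also have "\<dots> \<le> (\<Sum>U\<in>set Vs. T C U)"
      by (rule sum_filter_le) (use tb[OF C True] in auto)
    finally show ?thesis using True by simp
  next
    case False
    then have "T C U = 0" for U unfolding T_def w_def by simp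
    then show ?thesis using False by simp
  qed
  have "4 * \<epsilon>^5 / k * real n = (\<epsilon> * (4*\<epsilon>^2/k) * (\<epsilon> * real n)) * \<epsilon>"
    by (simp add: power2_eq_square power_def mult_ac)
  also have "\<dots> \<le> (\<epsilon> * (4*\<epsilon>^2/k) * (\<epsilon> * real n)) * (\<Sum>C\<in>{C\<in>set Ss. badC C}. mass n \<mu> C)"
    using mb e k by (intro mult_left_mono) auto
  also have "\<dots> = (\<Sum>C\<in>{C\<in>set Ss. badC C}. (\<epsilon> * (4*\<epsilon>^2/k) * (\<epsilon> * real n)) * mass n \<mu> C)"
    by (simp add: sum_distrib_left)
  also have "\<dots> \<le> (\<Sum>C\<in>set Ss. \<Sum>U\<in>set Vs. T C U)"
    by (rule sum_filter_le) (use tC in auto)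
  finally have g: "4 * \<epsilon>^5 / k * real n \<le> (\<Sum>C\<in>set Ss. \<Sum>U\<in>set Vs. real (card (w C U)) * (\<Sum>\<sigma>\<in>C. \<mu> \<sigma> * D \<sigma> (w C U) U))"
    unfolding T_def .
  have len: "length Ss \<le> card (G R :: ('a \<Rightarrow> nat) set) ^ length Vs" unfolding Ss_def by (rule Sp_len)
  show ?thesis using finish[OF Vs Ss wsub mu len g] unfolding k_def by blast
qed




lemma step:
  fixes \<mu> :: "(nat \<Rightarrow> 'a::finite) \<Rightarrow> real"
  assumes e: "\<epsilon> > 0" and Rk: "real (card (UNIV::'a set)) < \<epsilon> * real R"
    and prob: "is_prob n \<mu>" and Vs: "is_partition {..<n} Vs"
    and nh: "\<not> homogeneous n \<mu> \<epsilon> Vs (Sp R n Vs)"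
  shows "\<exists>Vs'. is_partition {..<n} Vs' \<and> refines Vs' Vs \<and>
     length Vs' \<le> 2^(length Vs) * 2^(card (G R :: ('a \<Rightarrow> nat) set) ^ length Vs * length Vs)
     \<and> ind n \<mu> Vs + 4 * min (\<epsilon>^4) (\<epsilon>^5) / real (card (UNIV::'a set)) * real n \<le> ind n \<mu> Vs'"
proof -
  define k where "k = real (card (UNIV::'a set))"
  have k: "k > 0" unfolding k_def by (simp add: card_gt_0_iff)
  have c4: "4 * min (\<epsilon>^4) (\<epsilon>^5) / k * real n \<le> 4 * \<epsilon>^4 / k * real n"
    using k by (intro mult_right_mono divide_right_mono) auto
  have c5: "4 * min (\<epsilon>^4) (\<epsilon>^5) / k * real n \<le> 4 * \<epsilon>^5 / k * real n"
    using k by (intro mult_right_mono divide_right_mono) auto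
  show ?thesis
  proof (cases "regular_wrt n \<mu> \<epsilon> Vs")
    case True
    from caseB[OF e Rk prob Vs True nh] c5 show ?thesis unfolding k_def by (meson add_left_mono order_trans)
  next
    case False
    have "1 \<le> card (G R :: ('a \<Rightarrow> nat) set) ^ length Vs" using card_G[where 'a='a] by simp
    from caseA[OF e prob Vs False this] c4 show ?thesis unfolding k_def by (meson add_left_mono order_trans)
  qed
qed

lemma ind_nonneg: "is_prob n \<mu> \<Longrightarrow> 0 \<le> ind n \<mu> Vs"
  unfolding ind_def is_prob_def by (intro sum_nonneg mult_nonneg_nonneg) (auto intro: sum_nonneg Q_nonneg)

lemma ind_le:
  fixes \<mu> :: "(nat \<Rightarrow> 'a::finite) \<Rightarrow> real"
  assumes prob: "is_prob n \<mu>" and Vs: "is_partition {..<n} Vs"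
  shows "ind n \<mu> Vs \<le> real (card (UNIV::'a set)) * real n"
proof -
  define k where "k = real (card (UNIV::'a set))"
  have finU: "finite U" if "U \<in> set Vs" for U
  proof -
    have "U \<subseteq> {..<n}" using part_Un[OF Vs] that by blast
    then show ?thesis by (rule finite_subset) simp
  qed
  have "card (\<Union>(set Vs)) = sum card (set Vs)"
    by (rule card_Union_disjoint) (use part_disj[OF Vs] finU in \<open>auto simp: pairwise_def disjnt_def\<close>)
  then have cs: "(\<Sum>W\<in>set Vs. real (card W)) = real n" using part_Un[OF Vs] by (simp flip: of_nat_sum)
  have "(\<Sum>W\<in>set Vs. Q \<sigma> W) \<le> k * real n" for \<sigma> :: "nat \<Rightarrow> 'a"
  proof -
    have "(\<Sum>W\<in>set Vs. Q \<sigma> W) \<le> (\<Sum>W\<in>set Vs. k * real (card W))"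
      unfolding k_def by (rule sum_mono) (rule Q_le[OF finU])
    also have "\<dots> = k * real n" by (simp add: sum_distrib_left[symmetric] cs)
    finally show ?thesis .
  qed
  then have "ind n \<mu> Vs \<le> (\<Sum>\<sigma>\<in>cube n. \<mu> \<sigma> * (k * real n))"
    unfolding ind_def using prob unfolding is_prob_def by (intro sum_mono mult_left_mono) auto
  also have "\<dots> = k * real n" using prob unfolding is_prob_def by (simp add: sum_distrib_right[symmetric])
  finally show ?thesis unfolding k_def .
qed

lemma refines_trans: "refines A B \<Longrightarrow> refines B C \<Longrightarrow> refines A C"
  unfolding refines_def by (meson order_trans)

lemma refines_refl: "refines A A"
  unfolding refines_def by auto


theorem theorem2p1:
  fixes \<epsilon> :: real
  assumes "\<epsilon> > 0"
  shows "\<exists>N::nat. N > 0 \<and>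
    (\<forall>n > N. \<forall>(\<mu> :: (nat \<Rightarrow> 'a::finite) \<Rightarrow> real) V0.
       is_prob n \<mu> \<and> is_partition {..<n} V0 \<and> real (length V0) \<le> 1 / \<epsilon> \<longrightarrow>
       (\<exists>Vs Ss. is_partition {..<n} Vs \<and> refines Vs V0 \<and> is_partition (cube n) Ss \<and>
          length Vs + length Ss \<le> N \<and> homogeneous n \<mu> \<epsilon> Vs Ss))"
proof -
  have e: "\<epsilon> > 0" by fact
  define k where "k = real (card (UNIV::'a set))"
  have k: "k > 0" unfolding k_def by (simp add: card_gt_0_iff)
  define R where "R = nat \<lceil>k/\<epsilon>\<rceil> + 1"
  have Rk: "real (card (UNIV::'a set)) < \<epsilon> * real R"
  proof -
    have "k/\<epsilon> < real R" unfolding R_def by linarith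
    then show ?thesis using e unfolding k_def by (simp add: field_simps)
  qed
  define K where "K = card (G R :: ('a \<Rightarrow> nat) set)"
  have K1: "1 \<le> K" unfolding K_def by (rule card_G)
  define gf :: "nat \<Rightarrow> nat" where "gf m = 2^m * 2^(K^m * m)" for m
  have gf_mono: "gf m \<le> gf m'" if "m \<le> m'" for m m'
  proof -
    have "K^m * m \<le> K^m' * m'" using that K1 by (intro mult_le_mono power_increasing) auto
    then have "(2::nat)^(K^m * m) \<le> 2^(K^m' * m')" by (intro power_increasing) auto
    moreover have "(2::nat)^m \<le> 2^m'" using that by (intro power_increasing) auto
    ultimately show ?thesis unfolding gf_def by (intro mult_le_mono)
  qed
  define H where "H t = ((\<lambda>m. max m (gf m)) ^^ t) (nat \<lfloor>1/\<epsilon>\<rfloor>)" for t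
  have H0: "H 0 = nat \<lfloor>1/\<epsilon>\<rfloor>" unfolding H_def by simp
  have HS: "H (Suc t) = max (H t) (gf (H t))" for t unfolding H_def by simp
  define c where "c = 4 * min (\<epsilon>^4) (\<epsilon>^5) / k"
  have c: "c > 0" unfolding c_def using e k by simp
  define T where "T = nat \<lceil>k/c\<rceil> + 1"
  have Tc: "k < real T * c"
  proof -
    have "k/c < real T" unfolding T_def by linarith
    then show ?thesis using c by (simp add: field_simps)
  qed
  define N where "N = H T + K ^ H T"
  have "N > 0" unfolding N_def using K1 by simp
  moreover have "\<forall>n > N. \<forall>(\<mu> :: (nat \<Rightarrow> 'a::finite) \<Rightarrow> real) V0.
       is_prob n \<mu> \<and> is_partition {..<n} V0 \<and> real (length V0) \<le> 1 / \<epsilon> \<longrightarrow>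
       (\<exists>Vs Ss. is_partition {..<n} Vs \<and> refines Vs V0 \<and> is_partition (cube n) Ss \<and>
          length Vs + length Ss \<le> N \<and> homogeneous n \<mu> \<epsilon> Vs Ss)"
  proof (intro allI impI)
    fix n :: nat and \<mu> :: "(nat \<Rightarrow> 'a) \<Rightarrow> real" and V0
    assume nN: "n > N" and h: "is_prob n \<mu> \<and> is_partition {..<n} V0 \<and> real (length V0) \<le> 1 / \<epsilon>"
    then have prob: "is_prob n \<mu>" and V0: "is_partition {..<n} V0" and lV0: "real (length V0) \<le> 1/\<epsilon>" by auto
    have n0: "real n > 0" using nN by simp
    have lV0': "length V0 \<le> H 0" unfolding H0 using lV0 by (simp add: le_nat_floor)
    define good where "good Vs \<longleftrightarrow> is_partition {..<n} Vs \<and> refines Vs V0 \<and> homogeneous n \<mu> \<epsilon> Vs (Sp R n Vs)" for Vs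
    have claim: "(\<exists>Vs. good Vs \<and> length Vs \<le> H t) \<or>
       (\<exists>Vs. is_partition {..<n} Vs \<and> refines Vs V0 \<and> length Vs \<le> H t \<and> real t * c * real n \<le> ind n \<mu> Vs)" for t
    proof (induction t)
      case 0
      then show ?case using V0 lV0' ind_nonneg[OF prob, of V0] refines_refl[of V0] by auto
    next
      case (Suc t)
      have Hle: "H t \<le> H (Suc t)" unfolding HS by simp
      from Suc show ?case
      proof
        assume "\<exists>Vs. good Vs \<and> length Vs \<le> H t"
        then show ?case using Hle by (meson le_trans)
      next
        assume "\<exists>Vs. is_partition {..<n} Vs \<and> refines Vs V0 \<and> length Vs \<le> H t \<and> real t * c * real n \<le> ind n \<mu> Vs"
        then obtain Vs where Vs: "is_partition {..<n} Vs" "refines Vs V0" "length Vs \<le> H t"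
          "real t * c * real n \<le> ind n \<mu> Vs" by blast
        show ?case
        proof (cases "homogeneous n \<mu> \<epsilon> Vs (Sp R n Vs)")
          case True
          then have "good Vs" using Vs unfolding good_def by blast
          then show ?thesis using Vs(3) Hle by (meson le_trans)
        next
          case False
          from step[OF e Rk prob Vs(1) False] obtain Vs' where Vs':
            "is_partition {..<n} Vs'" "refines Vs' Vs" "length Vs' \<le> gf (length Vs)"
            "ind n \<mu> Vs + c * real n \<le> ind n \<mu> Vs'"
            unfolding gf_def K_def c_def k_def by blast
          have "length Vs' \<le> H (Suc t)" using Vs'(3) gf_mono[OF Vs(3)] unfolding HS by simp
          moreover have "real (Suc t) * c * real n \<le> ind n \<mu> Vs'"
            using Vs(4) Vs'(4) by (simp add: algebra_simps)
          moreover have "refines Vs' V0" using refines_trans[OF Vs'(2) Vs(2)] .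
          ultimately show ?thesis using Vs'(1) by blast
        qed
      qed
    qed
    have "\<not> (\<exists>Vs. is_partition {..<n} Vs \<and> refines Vs V0 \<and> length Vs \<le> H T \<and> real T * c * real n \<le> ind n \<mu> Vs)"
    proof
      assume "\<exists>Vs. is_partition {..<n} Vs \<and> refines Vs V0 \<and> length Vs \<le> H T \<and> real T * c * real n \<le> ind n \<mu> Vs"
      then obtain Vs where "is_partition {..<n} Vs" "real T * c * real n \<le> ind n \<mu> Vs" by blast
      moreover have "ind n \<mu> Vs \<le> k * real n" using ind_le[OF prob \<open>is_partition {..<n} Vs\<close>] unfolding k_def .
      moreover have "k * real n < real T * c * real n" using Tc n0 by (simp add: mult_strict_right_mono)
      ultimately show False by linarith
    qed
    then obtain Vs where Vs: "good Vs" "length Vs \<le> H T" using claim[of T] by blast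
    have "length (Sp R n Vs :: (nat \<Rightarrow> 'a) set list) \<le> K ^ length Vs" unfolding K_def by (rule Sp_len)
    also have "\<dots> \<le> K ^ H T" using Vs(2) K1 by (intro power_increasing) auto
    finally have "length Vs + length (Sp R n Vs :: (nat \<Rightarrow> 'a) set list) \<le> N" unfolding N_def using Vs(2) by simp
    then show "\<exists>Vs Ss. is_partition {..<n} Vs \<and> refines Vs V0 \<and> is_partition (cube n) Ss \<and>
          length Vs + length Ss \<le> N \<and> homogeneous n \<mu> \<epsilon> Vs Ss"
      using Vs(1) Sp_part[of n R Vs] unfolding good_def by blast
  qed
  ultimately show ?thesis by blast
qed



end
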